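(* There is a universal constant $C$ such that the following holds. Let $R>0$, $K>1$, $\Omega:=B(0,R)\setminus B(0,R/K)\subset\mathbb{R}^2$, and let $f\in L^\infty(\mathbb{R}^2)$ with $\operatorname{supp} f\subset\Omega$. Then for all $x,y\in\Omega$ with $x\ne y$, $$|v_r[f](x)-v_r[f](y)|+|v_\alpha[f](x)-v_\alpha[f](y)|\le CK\|f\|_{L^\infty}|x-y|\Big(1+\log\frac{R}{|x-y|}\Big).$$
   Context: For a vorticity $f$, $v[f](x)=\frac{1}{2\pi}\int_{\mathbb{R}^2}\frac{(x-y)^\perp}{|x-y|^2}f(y)\,dy$ with $(x_1,x_2)^\perp=(-x_2,x_1)$. The radial and angular components of the velocity at $x\neq0$ are $v_r[f](x)=\hat x\cdot v[f](x)$ and $v_\alpha[f](x)=\hat x^\perp\cdot v[f](x)$, where $\hat x=x/|x|$. *)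

theory Defs
  imports "HOL-Analysis.Analysis" "HOL-Probability.Essential_Supremum"
begin

text \<open>The plane R^2 is modelled by the type complex (a 2-dimensional real
inner product space with Lebesgue measure lborel). The perpendicular
(x1,x2)^perp = (-x2,x1) is multiplication by the imaginary unit.\<close>

definition perp :: "complex \<Rightarrow> complex" where
  "perp z = \<i> * z"

definition velocity :: "(complex \<Rightarrow> real) \<Rightarrow> complex \<Rightarrow> complex" where
  "velocity f x = (1 / (2 * pi)) *\<^sub>R
     (\<integral> y. (f y / (cmod (x - y))\<^sup>2) *\<^sub>R perp (x - y) \<partial>lborel)"

definition v_r :: "(complex \<Rightarrow> real) \<Rightarrow> complex \<Rightarrow> real" where
  "v_r f x = inner (x /\<^sub>R norm x) (velocity f x)"

definition v_alpha :: "(complex \<Rightarrow> real) \<Rightarrow> complex \<Rightarrow> real" where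
  "v_alpha f x = inner (perp (x /\<^sub>R norm x)) (velocity f x)"

definition Linfty :: "(complex \<Rightarrow> real) set" where
  "Linfty = {f. f \<in> borel_measurable lborel \<and>
                 esssup lborel (\<lambda>y. ereal \<bar>f y\<bar>) < \<infinity>}"

definition Linfty_norm :: "(complex \<Rightarrow> real) \<Rightarrow> real" where
  "Linfty_norm f = real_of_ereal (esssup lborel (\<lambda>y. ereal \<bar>f y\<bar>))"

end

theory Submission
  imports Defs
begin

lemma cball_vol: fixes c :: complex assumes "r \<ge> 0"
  shows "emeasure lborel (cball c r) = ennreal (pi * r^2)"
  using emeasure_cball[OF assms, of c] by (simp add: unit_ball_vol_2)

lemma ball_vol: fixes c :: complex assumes "r \<ge> 0"
  shows "emeasure lborel (ball c r) = ennreal (pi * r^2)"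
  using emeasure_ball[OF assms, of c] by (simp add: unit_ball_vol_2)

lemma four_pow: "((2::real)^k)^2 = 4^k"
  by (simp add: power_mult_distrib[symmetric] power2_eq_square)

lemma dyadic: fixes s :: real assumes "s \<ge> 1"
  shows "\<exists>k::nat. 2^k \<le> s \<and> s < 2^(k+1)"
proof -
  obtain n where n: "s < 2^n" using real_arch_pow[of 2 s] by auto
  then have ex: "\<exists>n. s < (2::real)^(Suc n)"
    by (metis le_less_trans less_imp_le_nat lessI power_strict_increasing_iff one_less_numeral_iff semiring_norm(76) not_less)
  define k where "k = (LEAST n. s < (2::real)^(Suc n))"
  have k1: "s < 2^(Suc k)" unfolding k_def by (rule LeastI_ex[OF ex])
  have k2: "2^k \<le> s"
  proof (cases k)
    case 0 then show ?thesis using assms by simp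
  next
    case (Suc j)
    then have "\<not> s < 2^(Suc j)" using not_less_Least[of j "\<lambda>n. s < (2::real)^(Suc n)"] k_def by auto
    then show ?thesis using Suc by simp
  qed
  show ?thesis using k1 k2 by auto
qed

lemma ennreal_term_le_suminf: fixes g :: "nat \<Rightarrow> ennreal" shows "g k \<le> (\<Sum>i. g i)"
  using sum_le_suminf[of g "{k}"] by (auto intro: summableI)

lemma cball_borel[measurable]: "cball (c::complex) r \<in> sets borel"
  by (simp add: borel_closed)
lemma ball_borel[measurable]: "ball (c::complex) r \<in> sets borel"
  by (simp add: borel_open)

lemma near_bound: fixes c :: complex assumes r: "r > 0"
  shows "(\<integral>\<^sup>+z. ennreal (indicator (ball c r) z / cmod (c - z)) \<partial>lborel) \<le> ennreal (4*pi*r)"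
proof -
  define g where "g k z = ennreal (2^(k+1)/r) * indicator (cball c (r/2^k)) z" for k :: nat and z :: complex
  have pw: "ennreal (indicator (ball c r) z / cmod (c - z)) \<le> (\<Sum>k. g k z)" for z
  proof (cases "z \<in> ball c r \<and> z \<noteq> c")
    case False
    then show ?thesis by (auto simp: indicator_def)
  next
    case True
    define t where "t = cmod (c - z)"
    have t: "0 < t" "t < r" using True by (auto simp: t_def dist_norm)
    have "r / t \<ge> 1" using t by simp
    then obtain k :: nat where k: "2^k \<le> r/t" "r/t < 2^(k+1)" using dyadic by blast
    have "t \<le> r/2^k" using k t by (simp add: field_simps)
    then have zin: "z \<in> cball c (r/2^k)" by (simp add: dist_norm t_def)
    have "1/t \<le> 2^(k+1)/r" using k t by (simp add: field_simps)
    then have "ennreal (indicator (ball c r) z / cmod (c - z)) \<le> g k z"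
      using True zin by (simp add: g_def t_def indicator_def ennreal_leI)
    also have "\<dots> \<le> (\<Sum>k. g k z)" by (rule ennreal_term_le_suminf)
    finally show ?thesis .
  qed
  have "(\<integral>\<^sup>+z. ennreal (indicator (ball c r) z / cmod (c - z)) \<partial>lborel) \<le> (\<integral>\<^sup>+z. (\<Sum>k. g k z) \<partial>lborel)"
    by (rule nn_integral_mono) (rule pw)
  also have "\<dots> = (\<Sum>k. integral\<^sup>N lborel (g k))"
    unfolding g_def by (rule nn_integral_suminf) measurable
  also have "\<dots> = (\<Sum>k. ennreal (2*pi*r * (1/2)^k))"
  proof (rule suminf_cong)
    fix k :: nat
    have "integral\<^sup>N lborel (g k) = ennreal (2^(k+1)/r) * emeasure lborel (cball c (r/2^k))"
      unfolding g_def by (rule nn_integral_cmult_indicator) simp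
    also have "\<dots> = ennreal (2^(k+1)/r) * ennreal (pi * (r/2^k)^2)"
      using r by (subst cball_vol) auto
    also have "\<dots> = ennreal (2^(k+1)/r * (pi * (r/2^k)^2))"
      using r by (subst ennreal_mult) auto
    also have "2^(k+1)/r * (pi * (r/2^k)^2) = 2*pi*r * (1/2)^k"
      using r by (simp add: field_simps power2_eq_square power_divide)
    finally show "integral\<^sup>N lborel (g k) = ennreal (2*pi*r * (1/2)^k)" .
  qed
  also have "\<dots> = ennreal (\<Sum>k. 2*pi*r * (1/2)^k)"
    using r by (intro suminf_ennreal2) (auto intro: summable_mult summable_geometric)
  also have "(\<Sum>k. 2*pi*r * (1/2::real)^k) = 4*pi*r"
    by (subst suminf_mult) (auto simp: suminf_geometric summable_geometric)
  finally show ?thesis .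
qed

lemma far_bound: fixes c :: complex assumes a: "a > 0" and bN: "b \<le> a * 2^N"
  shows "(\<integral>\<^sup>+z. ennreal (indicator (ball c b - ball c a) z / (cmod (c - z))^2) \<partial>lborel) \<le> ennreal (4*pi*N)"
proof -
  define g where "g k z = ennreal (1/(a^2*4^k)) * indicator (ball c (a*2^(k+1))) z" for k :: nat and z :: complex
  have pw: "ennreal (indicator (ball c b - ball c a) z / (cmod (c - z))^2) \<le> (\<Sum>k<N. g k z)" for z
  proof (cases "z \<in> ball c b - ball c a")
    case False
    then show ?thesis by (auto simp: indicator_def)
  next
    case True
    define t where "t = cmod (c - z)"
    have t: "a \<le> t" "t < b" using True by (auto simp: t_def dist_norm)
    have "t / a \<ge> 1" using t a by simp
    then obtain k :: nat where k: "2^k \<le> t/a" "t/a < 2^(k+1)" using dyadic by blast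
    have "t < a * 2^(k+1)" using k a by (simp add: field_simps)
    then have zin: "z \<in> ball c (a*2^(k+1))" by (simp add: dist_norm t_def)
    have "(2::real)^k < 2^N"
    proof -
      have "t/a < b/a" using t a by (simp add: divide_strict_right_mono)
      also have "b/a \<le> 2^N" using bN a by (simp add: field_simps)
      finally have "t/a < 2^N" .
      then show ?thesis using k(1) by linarith
    qed
    then have kN: "k < N" by (rule power_less_imp_less_exp[rotated]) simp
    have ak: "a * 2^k \<le> t" using k a by (simp add: field_simps)
    have "(a*2^k)^2 \<le> t^2" using ak a by (intro power_mono) auto
    moreover have "(a*2^k)^2 = a^2*4^k" by (simp add: power_mult_distrib four_pow)
    ultimately have "a^2*4^k \<le> t^2" by simp
    moreover have pos4: "0 < a^2*4^k" using a by simp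
    ultimately have "inverse (t^2) \<le> inverse (a^2*4^k)" by (metis le_imp_inverse_le)
    then have "1/t^2 \<le> 1/(a^2*4^k)" by (simp add: inverse_eq_divide)
    then have "ennreal (indicator (ball c b - ball c a) z / (cmod (c - z))^2) \<le> g k z"
      using True zin by (simp add: g_def t_def indicator_def ennreal_leI)
    also have "\<dots> \<le> (\<Sum>k<N. g k z)" using kN by (intro member_le_sum) auto
    finally show ?thesis .
  qed
  have "(\<integral>\<^sup>+z. ennreal (indicator (ball c b - ball c a) z / (cmod (c - z))^2) \<partial>lborel) \<le> (\<integral>\<^sup>+z. (\<Sum>k<N. g k z) \<partial>lborel)"
    by (rule nn_integral_mono) (rule pw)
  also have "\<dots> = (\<Sum>k<N. integral\<^sup>N lborel (g k))"
    unfolding g_def by (rule nn_integral_sum) measurable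
  also have "\<dots> = (\<Sum>k<N. ennreal (4*pi))"
  proof (rule sum.cong)
    fix k assume "k \<in> {..<N}"
    have "integral\<^sup>N lborel (g k) = ennreal (1/(a^2*4^k)) * emeasure lborel (ball c (a*2^(k+1)))"
      unfolding g_def by (rule nn_integral_cmult_indicator) simp
    also have "\<dots> = ennreal (1/(a^2*4^k)) * ennreal (pi * (a*2^(k+1))^2)"
      using a by (subst ball_vol) auto
    also have "\<dots> = ennreal (1/(a^2*4^k) * (pi * (a*2^(k+1))^2))"
      using a by (subst ennreal_mult) auto
    also have "1/(a^2*4^k) * (pi * (a*2^(k+1))^2) = 4*pi"
    proof -
      have "(a*2^(k+1))^2 = a^2 * 4^k * 4" by (simp add: power_mult_distrib four_pow)
      then show ?thesis using a by simp
    qed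
    finally show "integral\<^sup>N lborel (g k) = ennreal (4*pi)" .
  qed simp
  also have "\<dots> = ennreal (4*pi*N)"
    by (simp add: ennreal_of_nat_eq_real_of_nat[symmetric] ennreal_mult' mult.commute)
  finally show ?thesis .
qed

definition kern :: "complex \<Rightarrow> complex" where "kern w = inverse (cnj w)"

lemma kern_eq: "(1 / (cmod w)^2) *\<^sub>R (\<i> * w) = \<i> * kern w"
proof (cases "w = 0")
  case True then show ?thesis by (simp add: kern_def)
next
  case False
  have e: "kern w = w / complex_of_real ((cmod w)^2)"
    using complex_div_cnj[of 1 "cnj w"] by (simp add: kern_def inverse_eq_divide)
  show ?thesis using False
    by (simp add: e scaleR_conv_of_real field_simps)
qed

lemma norm_kern: "norm (kern w) = 1 / cmod w"
  unfolding kern_def norm_inverse complex_mod_cnj by (simp add: inverse_eq_divide)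

lemma norm_kern_diff: assumes "a \<noteq> 0" "b \<noteq> 0"
  shows "norm (kern a - kern b) = cmod (a - b) / (cmod a * cmod b)"
proof -
  have "kern a - kern b = (cnj b - cnj a) / (cnj a * cnj b)"
    using assms by (simp add: kern_def field_simps)
  moreover have "cmod (cnj b - cnj a) = cmod (a - b)"
    by (metis complex_cnj_diff complex_mod_cnj norm_minus_commute)
  ultimately show ?thesis by (simp add: norm_divide norm_mult)
qed

lemma integrand_eq: "(g / (cmod w)^2) *\<^sub>R perp w = complex_of_real g * (\<i> * kern w)"
proof -
  have "(g / (cmod w)^2) *\<^sub>R perp w = g *\<^sub>R ((1 / (cmod w)^2) *\<^sub>R (\<i> * w))"
    by (simp add: perp_def)
  also have "\<dots> = g *\<^sub>R (\<i> * kern w)" by (simp only: kern_eq)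
  also have "\<dots> = complex_of_real g * (\<i> * kern w)" by (simp add: scaleR_conv_of_real)
  finally show ?thesis .
qed

lemma kern_pw:
  fixes x y z :: complex
  assumes d: "d = cmod (x - y)" "d > 0" and z: "cmod z < R" and x: "cmod x < R"
  shows "norm (kern (x - z) - kern (y - z)) \<le>
     indicator (ball x (2*d)) z / cmod (x - z) + indicator (ball y (3*d)) z / cmod (y - z)
     + 2*d * (indicator (ball x (2*R) - ball x (2*d)) z / (cmod (x - z))^2)"
proof (cases "cmod (x - z) < 2*d")
  case True
  have "cmod (y - z) \<le> cmod (y - x) + cmod (x - z)" using norm_triangle_ineq[of "y - x" "x - z"] by simp
  then have "cmod (y - z) < 3*d" using True d by (simp add: norm_minus_commute)
  then have i: "z \<in> ball x (2*d)" "z \<in> ball y (3*d)" using True by (auto simp: dist_norm)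
  have "norm (kern (x - z) - kern (y - z)) \<le> norm (kern (x - z)) + norm (kern (y - z))"
    by (rule norm_triangle_ineq4)
  also have "\<dots> = indicator (ball x (2*d)) z / cmod (x - z) + indicator (ball y (3*d)) z / cmod (y - z)"
    using i by (simp add: norm_kern)
  also have "\<dots> \<le> indicator (ball x (2*d)) z / cmod (x - z) + indicator (ball y (3*d)) z / cmod (y - z)
     + 2*d * (indicator (ball x (2*R) - ball x (2*d)) z / (cmod (x - z))^2)"
    using d by (simp add: indicator_def)
  finally show ?thesis .
next
  case False
  define t where "t = cmod (x - z)"
  have t: "2*d \<le> t" using False t_def by simp
  have "cmod (x - z) \<le> cmod x + cmod z" using norm_triangle_ineq4 by blast
  then have "t < 2*R" using x z t_def by simp
  then have i: "z \<in> ball x (2*R) - ball x (2*d)" using t by (auto simp: dist_norm t_def)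
  have "t - d \<le> cmod (y - z)"
    using norm_triangle_ineq[of "x - y" "y - z"] d t_def by simp
  then have yz: "t/2 \<le> cmod (y - z)" using t by simp
  have tp: "t > 0" using t d(2) by linarith
  have "x - z \<noteq> 0" "y - z \<noteq> 0" using tp yz t_def by auto
  then have "norm (kern (x - z) - kern (y - z)) = d / (t * cmod (y - z))"
    by (simp add: norm_kern_diff d t_def)
  also have "\<dots> \<le> d / (t * (t/2))"
    using tp yz d by (intro divide_left_mono mult_left_mono mult_pos_pos) auto
  also have "\<dots> = 2*d * (indicator (ball x (2*R) - ball x (2*d)) z / (cmod (x - z))^2)"
    using i tp by (simp add: t_def power2_eq_square)
  also have "\<dots> \<le> indicator (ball x (2*d)) z / cmod (x - z) + indicator (ball y (3*d)) z / cmod (y - z)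
     + 2*d * (indicator (ball x (2*R) - ball x (2*d)) z / (cmod (x - z))^2)"
    by (simp add: indicator_def)
  finally show ?thesis .
qed

lemma Linf_bound: assumes "f \<in> Linfty"
  shows "AE z in lborel. \<bar>f z\<bar> \<le> Linfty_norm f" "Linfty_norm f \<ge> 0"
proof -
  define E where "E = esssup lborel (\<lambda>y. ereal \<bar>f y\<bar>)"
  have fm: "f \<in> borel_measurable lborel" and Efin: "E < \<infinity>" using assms by (auto simp: Linfty_def E_def)
  have AEE: "AE z in lborel. ereal \<bar>f z\<bar> \<le> E" unfolding E_def by (rule esssup_AE)
  then have "AE z in (lborel::complex measure). 0 \<le> E" by eventually_elim (auto intro: order.trans[rotated])
  moreover have "ae_filter (lborel :: complex measure) \<noteq> bot"
    by (simp add: ae_filter_eq_bot_iff)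
  ultimately have E0: "0 \<le> E" using eventually_const by blast
  then obtain M where EM: "E = ereal M" and M0: "M \<ge> 0" using Efin
    by (cases E) auto
  have "Linfty_norm f = M" using EM by (simp add: Linfty_norm_def E_def[symmetric])
  moreover have "AE z in lborel. ereal \<bar>f z\<bar> \<le> E" unfolding E_def by (rule esssup_AE)
  ultimately show "AE z in lborel. \<bar>f z\<bar> \<le> Linfty_norm f" using EM by auto
  show "Linfty_norm f \<ge> 0" using EM M0 by (simp add: Linfty_norm_def E_def[symmetric])
qed

definition hh :: "(complex \<Rightarrow> real) \<Rightarrow> complex \<Rightarrow> complex \<Rightarrow> complex" where
  "hh f p z = (f z / (cmod (p - z))\<^sup>2) *\<^sub>R perp (p - z)"

lemma velocity_hh: "velocity f p = (1 / (2 * pi)) *\<^sub>R integral\<^sup>L lborel (hh f p)"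
  unfolding velocity_def hh_def[abs_def] by (rule refl)

lemma hh_eq: "hh f p z = complex_of_real (f z) * (\<i> * kern (p - z))"
  by (simp add: hh_def integrand_eq)

lemma norm_hh: "norm (hh f p z) = \<bar>f z\<bar> / cmod (p - z)"
  by (simp add: hh_eq norm_mult norm_kern)

lemma norm_hh_diff: "norm (hh f p z - hh f q z) = \<bar>f z\<bar> * norm (kern (p - z) - kern (q - z))"
proof -
  have "hh f p z - hh f q z = complex_of_real (f z) * (\<i> * (kern (p - z) - kern (q - z)))"
    by (simp add: hh_eq algebra_simps)
  then show ?thesis by (simp add: norm_mult)
qed

lemma hh_meas: assumes "f \<in> borel_measurable lborel" shows "hh f p \<in> borel_measurable lborel"
  using assms unfolding hh_def perp_def by measurable

lemma nn_int_bound: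
  assumes AE: "AE z in lborel. F z \<le> M * G z" and G: "\<And>z. G z \<ge> 0" and Gm: "G \<in> borel_measurable lborel"
    and M: "M \<ge> 0" and B: "(\<integral>\<^sup>+z. ennreal (G z) \<partial>lborel) \<le> ennreal B"
  shows "(\<integral>\<^sup>+z. ennreal (F z) \<partial>lborel) \<le> ennreal (M * B)"
proof -
  have "(\<integral>\<^sup>+z. ennreal (F z) \<partial>lborel) \<le> (\<integral>\<^sup>+z. ennreal M * ennreal (G z) \<partial>lborel)"
    using AE by (intro nn_integral_mono_AE) (auto simp: ennreal_mult'[symmetric] M intro: ennreal_leI)
  also have "\<dots> = ennreal M * (\<integral>\<^sup>+z. ennreal (G z) \<partial>lborel)"
    using Gm by (intro nn_integral_cmult) simp
  also have "\<dots> \<le> ennreal M * ennreal B" using B by (intro mult_left_mono) auto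
  also have "\<dots> \<le> ennreal (M * B)" using M by (simp add: ennreal_mult')
  finally show ?thesis .
qed

lemma vel_bound:
  assumes fm: "f \<in> borel_measurable lborel" and M: "M \<ge> 0"
    and AE: "AE z in lborel. \<bar>f z\<bar> \<le> M * indicator (ball 0 R) z"
    and p: "cmod p < R"
  shows "integrable lborel (hh f p)" "norm (velocity f p) \<le> 4*M*R"
proof -
  have R: "R > 0" using p norm_ge_zero[of p] by linarith
  have nn: "(\<integral>\<^sup>+z. ennreal (norm (hh f p z)) \<partial>lborel) \<le> ennreal (M * (4*pi*(2*R)))"
  proof (rule nn_int_bound[where G = "\<lambda>z. indicator (ball p (2*R)) z / cmod (p - z)"])
    show "AE z in lborel. norm (hh f p z) \<le> M * (indicator (ball p (2*R)) z / cmod (p - z))"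
      using AE
    proof eventually_elim
      case (elim z)
      show ?case
      proof (cases "z \<in> ball 0 R")
        case True
        have "cmod (p - z) \<le> cmod p + cmod z" by (rule norm_triangle_ineq4)
        then have "z \<in> ball p (2*R)" using True p by (auto simp: dist_norm)
        then show ?thesis using elim True by (simp add: norm_hh divide_right_mono)
      next
        case False
        then have "f z = 0" using elim by simp
        then show ?thesis using M by (simp add: norm_hh)
      qed
    qed
    show "(\<lambda>z. indicator (ball p (2*R)) z / cmod (p - z)) \<in> borel_measurable lborel" by measurable
  qed (use M R near_bound[of "2*R" p] in auto)
  have "(\<integral>\<^sup>+z. ennreal (norm (hh f p z)) \<partial>lborel) < \<infinity>"
    using nn by (simp add: order_le_less_trans)
  then show int: "integrable lborel (hh f p)"
    by (intro integrableI_bounded hh_meas fm)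
  have "ennreal (norm (integral\<^sup>L lborel (hh f p))) \<le> ennreal (M * (4*pi*(2*R)))"
    using integral_norm_bound_ennreal[OF int] nn by (rule order.trans)
  then have "norm (integral\<^sup>L lborel (hh f p)) \<le> M * (4*pi*(2*R))"
    using M R by (simp add: ennreal_le_iff)
  then show "norm (velocity f p) \<le> 4*M*R"
    by (simp add: velocity_hh field_simps)
qed

lemma vel_diff:
  assumes fm: "f \<in> borel_measurable lborel" and M: "M \<ge> 0"
    and AE: "AE z in lborel. \<bar>f z\<bar> \<le> M * indicator (ball 0 R) z"
    and x: "cmod x < R" and y: "cmod y < R" and d: "d = cmod (x - y)" "d > 0"
    and N: "R \<le> d * 2^N"
  shows "norm (velocity f x - velocity f y) \<le> M * d * (10 + 4 * N)"
proof -
  define A where "A z = indicator (ball x (2*d)) z / cmod (x - z)" for z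
  define B where "B z = indicator (ball y (3*d)) z / cmod (y - z)" for z
  define C where "C z = indicator (ball x (2*R) - ball x (2*d)) z / (cmod (x - z))^2" for z
  have Am: "A \<in> borel_measurable borel" unfolding A_def by measurable
  have Bm: "B \<in> borel_measurable borel" unfolding B_def by measurable
  have Cm: "C \<in> borel_measurable borel" unfolding C_def by measurable
  have A0: "A z \<ge> 0" "B z \<ge> 0" "C z \<ge> 0" for z by (auto simp: A_def B_def C_def)
  have intG: "(\<integral>\<^sup>+z. ennreal (A z + B z + 2*d * C z) \<partial>lborel) \<le> ennreal (4*pi*(2*d) + 4*pi*(3*d) + 2*d*(4*pi*N))"
  proof -
    have "(\<integral>\<^sup>+z. ennreal (A z + B z + 2*d * C z) \<partial>lborel)
        = (\<integral>\<^sup>+z. ennreal (A z) + ennreal (B z) + ennreal (2*d) * ennreal (C z) \<partial>lborel)"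
      using A0 d by (intro nn_integral_cong) (simp add: ennreal_plus ennreal_mult)
    also have "\<dots> = (\<integral>\<^sup>+z. ennreal (A z) \<partial>lborel) + (\<integral>\<^sup>+z. ennreal (B z) \<partial>lborel)
        + ennreal (2*d) * (\<integral>\<^sup>+z. ennreal (C z) \<partial>lborel)"
      using Am Bm Cm by (simp add: nn_integral_add nn_integral_cmult)
    also have "\<dots> \<le> ennreal (4*pi*(2*d)) + ennreal (4*pi*(3*d)) + ennreal (2*d) * ennreal (4*pi*N)"
    proof (intro add_mono mult_left_mono)
      show "(\<integral>\<^sup>+z. ennreal (A z) \<partial>lborel) \<le> ennreal (4*pi*(2*d))"
        unfolding A_def using near_bound[of "2*d" x] d by simp
      show "(\<integral>\<^sup>+z. ennreal (B z) \<partial>lborel) \<le> ennreal (4*pi*(3*d))"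
        unfolding B_def using near_bound[of "3*d" y] d by simp
      show "(\<integral>\<^sup>+z. ennreal (C z) \<partial>lborel) \<le> ennreal (4*pi*N)"
        unfolding C_def using far_bound[of "2*d" "2*R" N x] d N by simp
    qed simp
    also have "\<dots> = ennreal (4*pi*(2*d)) + ennreal (4*pi*(3*d)) + ennreal (2*d*(4*pi*N))"
    proof -
      have "ennreal (2*d) * ennreal (4*pi*N) = ennreal (2*d*(4*pi*N))"
        using d by (intro ennreal_mult[symmetric]) auto
      then show ?thesis by simp
    qed
    also have "\<dots> = ennreal (4*pi*(2*d) + 4*pi*(3*d) + 2*d*(4*pi*N))"
      using d by (subst ennreal_plus[symmetric], simp, simp)+ simp
    finally show ?thesis .
  qed
  have nn: "(\<integral>\<^sup>+z. ennreal (norm (hh f x z - hh f y z)) \<partial>lborel) \<le> ennreal (M * (4*pi*(2*d) + 4*pi*(3*d) + 2*d*(4*pi*N)))"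
  proof (rule nn_int_bound[where G = "\<lambda>z. A z + B z + 2*d * C z"])
    show "AE z in lborel. norm (hh f x z - hh f y z) \<le> M * (A z + B z + 2*d * C z)"
      using AE
    proof eventually_elim
      case (elim z)
      show ?case
      proof (cases "z \<in> ball 0 R")
        case True
        have k: "norm (kern (x - z) - kern (y - z)) \<le> A z + B z + 2*d * C z"
          unfolding A_def B_def C_def using kern_pw[OF d, of z R] True x by simp
        have "norm (hh f x z - hh f y z) = \<bar>f z\<bar> * norm (kern (x - z) - kern (y - z))" by (rule norm_hh_diff)
        also have "\<dots> \<le> M * (A z + B z + 2*d * C z)"
          using elim True k by (intro mult_mono) auto
        finally show ?thesis .
      next
        case False
        then have "f z = 0" using elim by simp
        then show ?thesis using M A0 d by (simp add: norm_hh_diff)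
      qed
    qed
    show "(\<lambda>z. A z + B z + 2*d * C z) \<in> borel_measurable lborel" using Am Bm Cm by measurable
    show "\<And>z. 0 \<le> A z + B z + 2*d * C z" using A0 d by simp
  qed (use M intG in auto)
  have ix: "integrable lborel (hh f x)" using vel_bound[OF fm M AE x] by simp
  have iy: "integrable lborel (hh f y)" using vel_bound[OF fm M AE y] by simp
  have int: "integrable lborel (\<lambda>z. hh f x z - hh f y z)" using ix iy by simp
  have "ennreal (norm (integral\<^sup>L lborel (\<lambda>z. hh f x z - hh f y z))) \<le> ennreal (M * (4*pi*(2*d) + 4*pi*(3*d) + 2*d*(4*pi*N)))"
    using integral_norm_bound_ennreal[OF int] nn by (rule order.trans)
  then have "norm (integral\<^sup>L lborel (\<lambda>z. hh f x z - hh f y z)) \<le> M * (4*pi*(2*d) + 4*pi*(3*d) + 2*d*(4*pi*N))"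
    using M d by (simp add: ennreal_le_iff)
  moreover have "velocity f x - velocity f y = (1/(2*pi)) *\<^sub>R integral\<^sup>L lborel (\<lambda>z. hh f x z - hh f y z)"
    using ix iy by (simp add: velocity_hh scaleR_diff_right)
  ultimately have "norm (velocity f x - velocity f y) \<le> (1/(2*pi)) * (M * (4*pi*(2*d) + 4*pi*(3*d) + 2*d*(4*pi*N)))"
    by (simp add: divide_right_mono)
  also have "\<dots> = M * d * (10 + 4 * N)" by (simp add: field_simps)
  finally show ?thesis .
qed

lemma unit_diff: fixes x y :: complex assumes "x \<noteq> 0" "y \<noteq> 0"
  shows "norm (x /\<^sub>R norm x - y /\<^sub>R norm y) \<le> 2 * cmod (x - y) / cmod x"
proof -
  have nx: "norm x > 0" "norm y > 0" using assms by auto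
  have e: "x /\<^sub>R norm x - y /\<^sub>R norm y = (x - y) /\<^sub>R norm x + ((norm y - norm x)/(norm x)) *\<^sub>R (y /\<^sub>R norm y)"
    using nx by (simp add: scaleR_conv_of_real field_simps)
  have "norm (x /\<^sub>R norm x - y /\<^sub>R norm y) \<le> norm ((x - y) /\<^sub>R norm x) + norm (((norm y - norm x)/(norm x)) *\<^sub>R (y /\<^sub>R norm y))"
    unfolding e by (rule norm_triangle_ineq)
  also have "norm ((x - y) /\<^sub>R norm x) = cmod (x - y) / cmod x" using nx by (simp add: divide_inverse mult.commute)
  also have "norm (((norm y - norm x)/(norm x)) *\<^sub>R (y /\<^sub>R norm y)) = \<bar>norm y - norm x\<bar> / norm x"
  proof -
    have "norm (y /\<^sub>R norm y) = 1" using nx by (simp add: norm_sgn[unfolded sgn_div_norm] )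
    then show ?thesis using nx by (simp only: norm_scaleR abs_divide)
  qed
  also have "\<bar>norm y - norm x\<bar> \<le> cmod (x - y)"
    using norm_triangle_ineq3[of y x] by (simp add: norm_minus_commute)
  finally show ?thesis using nx by (simp add: divide_right_mono add_divide_distrib[symmetric])
qed

lemma inner_diff_bound: fixes a b V W :: complex assumes "norm a = 1"
  shows "\<bar>inner a V - inner b W\<bar> \<le> norm (V - W) + norm (a - b) * norm W"
proof -
  have "inner a V - inner b W = inner a (V - W) + inner (a - b) W"
    by (simp add: inner_diff_right inner_diff_left)
  then have "\<bar>inner a V - inner b W\<bar> \<le> \<bar>inner a (V - W)\<bar> + \<bar>inner (a - b) W\<bar>" by simp
  also have "\<dots> \<le> norm a * norm (V - W) + norm (a - b) * norm W"
    by (intro add_mono Cauchy_Schwarz_ineq2)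
  finally show ?thesis using assms by simp
qed

lemma ln2_le: "ln (2::real) \<le> 4/5"
proof -
  have "1 + 1 + 1^2/2 \<le> exp (1::real)" using exp_lower_Taylor_quadratic[of 1] by simp
  then have "ln (5/2::real) \<le> ln (exp 1)" by (subst ln_le_cancel_iff) auto
  then have "ln (5/2::real) \<le> 1" by simp
  moreover have "ln (4/5::real) \<le> 4/5 - 1" by (rule ln_le_minus_one) simp
  moreover have "ln (5/2::real) = ln 2 - ln (4/5)"
    using ln_div[of 2 "4/5"] by simp
  ultimately show ?thesis by simp
qed

lemma norm_perp: "norm (perp a) = norm a" by (simp add: perp_def norm_mult)
lemma perp_diff: "perp a - perp b = perp (a - b)" by (simp add: perp_def algebra_simps)

theorem corollary3p2:
  shows "\<exists>C::real. \<forall>(R::real) (K::real) (f::complex \<Rightarrow> real) x y.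
    R > 0 \<longrightarrow> K > 1 \<longrightarrow> f \<in> Linfty \<longrightarrow>
    (AE z in lborel. z \<notin> ball 0 R - ball 0 (R / K) \<longrightarrow> f z = 0) \<longrightarrow>
    x \<in> ball 0 R - ball 0 (R / K) \<longrightarrow> y \<in> ball 0 R - ball 0 (R / K) \<longrightarrow> x \<noteq> y \<longrightarrow>
    \<bar>v_r f x - v_r f y\<bar> + \<bar>v_alpha f x - v_alpha f y\<bar>
      \<le> C * K * Linfty_norm f * cmod (x - y) * (1 + ln (R / cmod (x - y)))"
proof (intro exI[of _ 200] allI impI)
  fix R K :: real and f :: "complex \<Rightarrow> real" and x y :: complex
  assume R: "R > 0" and K: "K > 1" and fL: "f \<in> Linfty"
    and supp: "AE z in lborel. z \<notin> ball 0 R - ball 0 (R / K) \<longrightarrow> f z = 0"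
    and xO: "x \<in> ball 0 R - ball 0 (R / K)" and yO: "y \<in> ball 0 R - ball 0 (R / K)" and xy: "x \<noteq> y"
  define M where "M = Linfty_norm f"
  have fm: "f \<in> borel_measurable lborel" using fL by (simp add: Linfty_def)
  have M0: "M \<ge> 0" using Linf_bound[OF fL] by (simp add: M_def)
  have AE: "AE z in lborel. \<bar>f z\<bar> \<le> M * indicator (ball 0 R) z"
    using Linf_bound(1)[OF fL] supp
  proof eventually_elim
    case (elim z)
    then show ?case by (cases "z \<in> ball 0 R") (auto simp: M_def)
  qed
  have x: "cmod x < R" "R / K \<le> cmod x" using xO by auto
  have y: "cmod y < R" "R / K \<le> cmod y" using yO by auto
  have RK: "R / K > 0" using R K by simp
  have x0: "x \<noteq> 0" "y \<noteq> 0" using x y RK by auto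
  define d where "d = cmod (x - y)"
  have d0: "d > 0" using xy by (simp add: d_def)
  have d2R: "d < 2*R"
  proof -
    have "d \<le> cmod x + cmod y" unfolding d_def by (rule norm_triangle_ineq4)
    then show ?thesis using x y by simp
  qed
  define L where "L = 1 + ln (R / d)"
  have L5: "L \<ge> 1/5"
  proof -
    have "R / d > 1/2" using d2R d0 by (simp add: field_simps)
    then have "ln (R / d) > ln (1/2)" using d0 R by (subst ln_less_cancel_iff) auto
    moreover have "ln (1/2::real) = - ln 2" by (simp add: ln_div)
    ultimately show ?thesis using ln2_le by (simp add: L_def)
  qed
  define N where "N = nat \<lceil>ln (R / d) / ln 2\<rceil>"
  have ln2p: "ln (2::real) > 0" by simp
  have RN: "R \<le> d * 2^N"
  proof -
    have "ln (R / d) / ln 2 \<le> real N" unfolding N_def by (rule real_nat_ceiling_ge)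
    then have "ln (R / d) \<le> real N * ln 2" using ln2p by (simp add: divide_le_eq)
    then have "exp (ln (R / d)) \<le> exp (real N * ln 2)" by simp
    moreover have "exp (ln (R / d)) = R / d" using R d0 by simp
    moreover have "exp (real N * ln 2) = (2::real)^N"
      by (simp add: exp_of_nat_mult)
    ultimately have "R / d \<le> 2^N" by simp
    then show ?thesis using d0 by (simp add: divide_le_eq mult.commute)
  qed
  have NL: "real N \<le> 2 * L"
  proof (cases "ln (R / d) \<le> 0")
    case True
    then have "ln (R / d) / ln 2 \<le> 0" using ln2p by (simp add: divide_nonpos_pos)
    then have "N = 0" unfolding N_def by simp
    then show ?thesis using L5 by simp
  next
    case False
    have "ln (R / d) / ln 2 > 0" using False ln2p by simp
    then have "real N = of_int \<lceil>ln (R / d) / ln 2\<rceil>" unfolding N_def by simp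
    also have "\<dots> \<le> ln (R / d) / ln 2 + 1" by (rule of_int_ceiling_le_add_one)
    also have "ln (R / d) / ln 2 \<le> ln (R / d) / (2/3)"
      using False ln2_ge_two_thirds by (intro divide_left_mono) auto
    finally show ?thesis using False by (simp add: L_def)
  qed
  define Vx where "Vx = velocity f x"
  define Vy where "Vy = velocity f y"
  have D1: "norm (Vx - Vy) \<le> M * d * (10 + 4 * N)"
    unfolding Vx_def Vy_def by (rule vel_diff[OF fm M0 AE x(1) y(1) d_def d0 RN])
  have Vb: "norm Vy \<le> 4*M*R" unfolding Vy_def by (rule vel_bound(2)[OF fm M0 AE y(1)])
  define u where "u = norm (x /\<^sub>R norm x - y /\<^sub>R norm y)"
  have u: "u \<le> 2 * d * K / R"
  proof -
    have "u \<le> 2 * d / cmod x" unfolding u_def d_def by (rule unit_diff[OF x0])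
    also have "\<dots> \<le> 2 * d / (R / K)" using d0 RK x by (intro divide_left_mono mult_pos_pos) auto
    finally show ?thesis using K by simp
  qed
  have nx: "norm (x /\<^sub>R norm x) = 1" using x0 by simp
  have e1: "\<bar>v_r f x - v_r f y\<bar> \<le> norm (Vx - Vy) + u * norm Vy"
    unfolding v_r_def Vx_def[symmetric] Vy_def[symmetric] u_def
    by (rule inner_diff_bound[OF nx])
  have e2: "\<bar>v_alpha f x - v_alpha f y\<bar> \<le> norm (Vx - Vy) + u * norm Vy"
    unfolding v_alpha_def Vx_def[symmetric] Vy_def[symmetric] u_def
    using inner_diff_bound[of "perp (x /\<^sub>R norm x)" Vx "perp (y /\<^sub>R norm y)" Vy] nx
    by (simp add: norm_perp perp_diff)
  have uV: "u * norm Vy \<le> (2 * d * K / R) * (4*M*R)"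
    using u Vb d0 K R by (intro mult_mono) (auto simp: u_def)
  have "(2 * d * K / R) * (4*M*R) = 8 * K * M * d" using R by (simp add: field_simps)
  then have sum: "\<bar>v_r f x - v_r f y\<bar> + \<bar>v_alpha f x - v_alpha f y\<bar> \<le> M * d * (20 + 8 * N + 16 * K)"
    using e1 e2 D1 uV by (simp add: algebra_simps)
  have "20 + 8 * real N + 16 * K \<le> 200 * K * L"
  proof -
    have kl: "1 * (1/5) \<le> K * L" using K L5 by (intro mult_mono) auto
    have lkl: "1 * L \<le> K * L" using K L5 by (intro mult_right_mono) auto
    have kkl: "K * 1 \<le> K * (5 * L)" using K L5 by (intro mult_left_mono) auto
    have "20 \<le> 100 * K * L" using kl by simp
    moreover have "8 * real N \<le> 16 * K * L" using NL lkl by simp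
    moreover have "16 * K \<le> 84 * K * L" using kkl K L5 by simp
    ultimately show ?thesis by simp
  qed
  then have "M * d * (20 + 8 * N + 16 * K) \<le> M * d * (200 * K * L)"
    using M0 d0 by (intro mult_left_mono) auto
  also have "\<dots> = 200 * K * Linfty_norm f * cmod (x - y) * (1 + ln (R / cmod (x - y)))"
    by (simp add: M_def d_def L_def)
  finally show "\<bar>v_r f x - v_r f y\<bar> + \<bar>v_alpha f x - v_alpha f y\<bar>
      \<le> 200 * K * Linfty_norm f * cmod (x - y) * (1 + ln (R / cmod (x - y)))"
    using sum by linarith
qed

end
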